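(* Let $R$ be a commutative associative unital ring and $B$ a central $R$-algebra. Assume that $\beta$ is an invariant $R$-bilinear form on $B$ which is nonsingular and satisfies $\beta(B,B)=R$, and that the $R$-module $\mathbf{IBF}_R(B)$ is projective. Then $(B,\beta)$ satisfies the IBF-principle, i.e. the map $\bar\beta\colon\mathbf{IBF}_R(B)\to R$, $\overline{a\otimes b}\mapsto\beta(a,b)$, is an isomorphism of $R$-modules.
   Context: An $R$-algebra is an $R$-module with an $R$-bilinear product (no identities assumed). $\beta$ is invariant if $\beta(ab,c)=\beta(a,bc)=\beta(b,ca)$ for all $a,b,c\in B$; nonsingular if $b\mapsto\beta(b,-)$ is a bijection $B\to\mathrm{Hom}_R(B,R)$. $\beta(B,B)$ denotes the $R$-span of the values $\beta(a,b)$. The centroid is $\mathrm{Cent}_R(B)=\{\chi\in\mathrm{End}_R(B):\chi(ab)=a\chi(b)=\chi(a)b\ \forall a,b\}$, and $B$ is central if the map $R\to\mathrm{Cent}_R(B)$, $r\mapsto(b\mapsto rb)$, is an isomorphism. $\mathbf{IBF}_R(B)$ is the quotient of $B\otimes_R B$ by the $R$-submodule spanned by all $ab\otimes c-a\otimes bc$ and $ab\otimes c-b\otimes ca$, and $\overline{a\otimes b}$ denotes the class of $a\otimes b$. *)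

theory Defs
  imports "HOL-Algebra.Module" "HOL-Algebra.Ideal" "HOL-Algebra.AbelCoset"
begin

text \<open>R-algebras (no identity, no associativity): an R-module B (HOL-Algebra module record)
  whose multiplication field is an R-bilinear product.\<close>
definition R_algebra :: "'r ring \<Rightarrow> ('r, 'b) module \<Rightarrow> bool" where
  "R_algebra R B \<longleftrightarrow> module R B \<and>
     (\<forall>a\<in>carrier B. \<forall>b\<in>carrier B. a \<otimes>\<^bsub>B\<^esub> b \<in> carrier B) \<and>
     (\<forall>a\<in>carrier B. \<forall>a'\<in>carrier B. \<forall>b\<in>carrier B.
        (a \<oplus>\<^bsub>B\<^esub> a') \<otimes>\<^bsub>B\<^esub> b = (a \<otimes>\<^bsub>B\<^esub> b) \<oplus>\<^bsub>B\<^esub> (a' \<otimes>\<^bsub>B\<^esub> b) \<and>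
        b \<otimes>\<^bsub>B\<^esub> (a \<oplus>\<^bsub>B\<^esub> a') = (b \<otimes>\<^bsub>B\<^esub> a) \<oplus>\<^bsub>B\<^esub> (b \<otimes>\<^bsub>B\<^esub> a')) \<and>
     (\<forall>r\<in>carrier R. \<forall>a\<in>carrier B. \<forall>b\<in>carrier B.
        (r \<odot>\<^bsub>B\<^esub> a) \<otimes>\<^bsub>B\<^esub> b = r \<odot>\<^bsub>B\<^esub> (a \<otimes>\<^bsub>B\<^esub> b) \<and>
        a \<otimes>\<^bsub>B\<^esub> (r \<odot>\<^bsub>B\<^esub> b) = r \<odot>\<^bsub>B\<^esub> (a \<otimes>\<^bsub>B\<^esub> b))"

definition mod_hom :: "'r ring \<Rightarrow> ('r, 'm) module \<Rightarrow> ('r, 'n) module \<Rightarrow> ('m \<Rightarrow> 'n) \<Rightarrow> bool" where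
  "mod_hom R M N f \<longleftrightarrow> f \<in> carrier M \<rightarrow> carrier N \<and>
     (\<forall>x\<in>carrier M. \<forall>y\<in>carrier M. f (x \<oplus>\<^bsub>M\<^esub> y) = f x \<oplus>\<^bsub>N\<^esub> f y) \<and>
     (\<forall>r\<in>carrier R. \<forall>x\<in>carrier M. f (r \<odot>\<^bsub>M\<^esub> x) = r \<odot>\<^bsub>N\<^esub> f x)"

definition mod_iso :: "'r ring \<Rightarrow> ('r, 'm) module \<Rightarrow> ('r, 'n) module \<Rightarrow> ('m \<Rightarrow> 'n) \<Rightarrow> bool" where
  "mod_iso R M N f \<longleftrightarrow> mod_hom R M N f \<and> bij_betw f (carrier M) (carrier N)"

definition ring_mod :: "'r ring \<Rightarrow> ('r, 'r) module" where
  "ring_mod R = \<lparr>carrier = carrier R, mult = mult R, one = one R, zero = zero R,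
                 add = add R, smult = mult R\<rparr>"

definition centroid :: "'r ring \<Rightarrow> ('r, 'b) module \<Rightarrow> ('b \<Rightarrow> 'b) set" where
  "centroid R B = {\<chi>. \<chi> \<in> extensional (carrier B) \<and> mod_hom R B B \<chi> \<and>
     (\<forall>a\<in>carrier B. \<forall>b\<in>carrier B.
        \<chi> (a \<otimes>\<^bsub>B\<^esub> b) = a \<otimes>\<^bsub>B\<^esub> \<chi> b \<and> \<chi> (a \<otimes>\<^bsub>B\<^esub> b) = \<chi> a \<otimes>\<^bsub>B\<^esub> b)}"

definition central :: "'r ring \<Rightarrow> ('r, 'b) module \<Rightarrow> bool" where
  "central R B \<longleftrightarrow>
     bij_betw (\<lambda>r. \<lambda>b\<in>carrier B. r \<odot>\<^bsub>B\<^esub> b) (carrier R) (centroid R B)"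

definition bilinear_form :: "'r ring \<Rightarrow> ('r, 'b) module \<Rightarrow> ('b \<Rightarrow> 'b \<Rightarrow> 'r) \<Rightarrow> bool" where
  "bilinear_form R B \<beta> \<longleftrightarrow>
     (\<forall>a\<in>carrier B. \<forall>b\<in>carrier B. \<beta> a b \<in> carrier R) \<and>
     (\<forall>a\<in>carrier B. \<forall>a'\<in>carrier B. \<forall>b\<in>carrier B.
        \<beta> (a \<oplus>\<^bsub>B\<^esub> a') b = \<beta> a b \<oplus>\<^bsub>R\<^esub> \<beta> a' b \<and>
        \<beta> b (a \<oplus>\<^bsub>B\<^esub> a') = \<beta> b a \<oplus>\<^bsub>R\<^esub> \<beta> b a') \<and>
     (\<forall>r\<in>carrier R. \<forall>a\<in>carrier B. \<forall>b\<in>carrier B.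
        \<beta> (r \<odot>\<^bsub>B\<^esub> a) b = r \<otimes>\<^bsub>R\<^esub> \<beta> a b \<and>
        \<beta> a (r \<odot>\<^bsub>B\<^esub> b) = r \<otimes>\<^bsub>R\<^esub> \<beta> a b)"

definition invariant_form :: "('r, 'b) module \<Rightarrow> ('b \<Rightarrow> 'b \<Rightarrow> 'r) \<Rightarrow> bool" where
  "invariant_form B \<beta> \<longleftrightarrow>
     (\<forall>a\<in>carrier B. \<forall>b\<in>carrier B. \<forall>c\<in>carrier B.
        \<beta> (a \<otimes>\<^bsub>B\<^esub> b) c = \<beta> a (b \<otimes>\<^bsub>B\<^esub> c) \<and>
        \<beta> a (b \<otimes>\<^bsub>B\<^esub> c) = \<beta> b (c \<otimes>\<^bsub>B\<^esub> a))"

definition dual_mod :: "'r ring \<Rightarrow> ('r, 'b) module \<Rightarrow> ('b \<Rightarrow> 'r) set" where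
  "dual_mod R B = {\<phi>. \<phi> \<in> extensional (carrier B) \<and> mod_hom R B (ring_mod R) \<phi>}"

definition nonsingular :: "'r ring \<Rightarrow> ('r, 'b) module \<Rightarrow> ('b \<Rightarrow> 'b \<Rightarrow> 'r) \<Rightarrow> bool" where
  "nonsingular R B \<beta> \<longleftrightarrow>
     bij_betw (\<lambda>b. \<lambda>c\<in>carrier B. \<beta> b c) (carrier B) (dual_mod R B)"

definition free_mod :: "'r ring \<Rightarrow> 'a set \<Rightarrow> ('r, 'a \<Rightarrow> 'r) module" where
  "free_mod R S = \<lparr>carrier = {f. (\<forall>x. f x \<in> carrier R) \<and> (\<forall>x. x \<notin> S \<longrightarrow> f x = \<zero>\<^bsub>R\<^esub>)
                                 \<and> finite {x. f x \<noteq> \<zero>\<^bsub>R\<^esub>}},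
                   mult = (\<lambda>f g. undefined), one = undefined,
                   zero = (\<lambda>x. \<zero>\<^bsub>R\<^esub>),
                   add = (\<lambda>f g x. f x \<oplus>\<^bsub>R\<^esub> g x),
                   smult = (\<lambda>r f x. r \<otimes>\<^bsub>R\<^esub> f x)\<rparr>"

definition delta :: "'r ring \<Rightarrow> 'a \<Rightarrow> ('a \<Rightarrow> 'r)" where
  "delta R p = (\<lambda>x. if x = p then \<one>\<^bsub>R\<^esub> else \<zero>\<^bsub>R\<^esub>)"

definition gen_submod :: "'r ring \<Rightarrow> ('r, 'm) module \<Rightarrow> 'm set \<Rightarrow> 'm set" where
  "gen_submod R M S = \<Inter>{H. submodule H R M \<and> S \<subseteq> H}"

definition quot_mod :: "'r ring \<Rightarrow> ('r, 'm) module \<Rightarrow> 'm set \<Rightarrow> ('r, 'm set) module" where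
  "quot_mod R M N = \<lparr>carrier = a_rcosets\<^bsub>M\<^esub> N,
                     mult = (\<lambda>X Y. undefined), one = undefined,
                     zero = N,
                     add = (\<lambda>X Y. X <+>\<^bsub>M\<^esub> Y),
                     smult = (\<lambda>r X. N <+>\<^bsub>M\<^esub> ((\<lambda>x. r \<odot>\<^bsub>M\<^esub> x) ` X))\<rparr>"

text \<open>B \<otimes>_R B is the free module on B \<times> B modulo the bilinearity relations; IBF_R(B) is its
  quotient by the invariance relations. We quotient the free module by both at once.\<close>
definition ibf_rels :: "'r ring \<Rightarrow> ('r, 'b) module \<Rightarrow> ('b \<times> 'b \<Rightarrow> 'r) set" where
  "ibf_rels R B = (let F = free_mod R (carrier B \<times> carrier B); d = delta R in
     {d (a \<oplus>\<^bsub>B\<^esub> a', b) \<ominus>\<^bsub>F\<^esub> (d (a, b) \<oplus>\<^bsub>F\<^esub> d (a', b)) | a a' b.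
        a \<in> carrier B \<and> a' \<in> carrier B \<and> b \<in> carrier B} \<union>
     {d (a, b \<oplus>\<^bsub>B\<^esub> b') \<ominus>\<^bsub>F\<^esub> (d (a, b) \<oplus>\<^bsub>F\<^esub> d (a, b')) | a b b'.
        a \<in> carrier B \<and> b \<in> carrier B \<and> b' \<in> carrier B} \<union>
     {d (r \<odot>\<^bsub>B\<^esub> a, b) \<ominus>\<^bsub>F\<^esub> (r \<odot>\<^bsub>F\<^esub> d (a, b)) | r a b.
        r \<in> carrier R \<and> a \<in> carrier B \<and> b \<in> carrier B} \<union>
     {d (a, r \<odot>\<^bsub>B\<^esub> b) \<ominus>\<^bsub>F\<^esub> (r \<odot>\<^bsub>F\<^esub> d (a, b)) | r a b.
        r \<in> carrier R \<and> a \<in> carrier B \<and> b \<in> carrier B} \<union>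
     {d (a \<otimes>\<^bsub>B\<^esub> b, c) \<ominus>\<^bsub>F\<^esub> d (a, b \<otimes>\<^bsub>B\<^esub> c) | a b c.
        a \<in> carrier B \<and> b \<in> carrier B \<and> c \<in> carrier B} \<union>
     {d (a \<otimes>\<^bsub>B\<^esub> b, c) \<ominus>\<^bsub>F\<^esub> d (b, c \<otimes>\<^bsub>B\<^esub> a) | a b c.
        a \<in> carrier B \<and> b \<in> carrier B \<and> c \<in> carrier B})"

definition IBF :: "'r ring \<Rightarrow> ('r, 'b) module \<Rightarrow> ('r, ('b \<times> 'b \<Rightarrow> 'r) set) module" where
  "IBF R B = (let F = free_mod R (carrier B \<times> carrier B) in
                quot_mod R F (gen_submod R F (ibf_rels R B)))"

text \<open>The map \<beta>-bar: the linear extension of (a,b) \<mapsto> \<beta>(a,b) on the free module,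
  evaluated on a representative of the class.\<close>
definition beta_lin :: "'r ring \<Rightarrow> ('b \<Rightarrow> 'b \<Rightarrow> 'r) \<Rightarrow> ('b \<times> 'b \<Rightarrow> 'r) \<Rightarrow> 'r" where
  "beta_lin R \<beta> f = finsum R (\<lambda>p. f p \<otimes>\<^bsub>R\<^esub> \<beta> (fst p) (snd p)) {p. f p \<noteq> \<zero>\<^bsub>R\<^esub>}"

definition beta_bar :: "'r ring \<Rightarrow> ('b \<Rightarrow> 'b \<Rightarrow> 'r) \<Rightarrow> ('b \<times> 'b \<Rightarrow> 'r) set \<Rightarrow> 'r" where
  "beta_bar R \<beta> X = the_elem (beta_lin R \<beta> ` X)"

text \<open>Projective module: a direct summand of a free module, expressed as: the canonical
  surjection from the free module on the carrier of P onto P admits an R-linear section.\<close>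
definition projective :: "'r ring \<Rightarrow> ('r, 'm) module \<Rightarrow> bool" where
  "projective R P \<longleftrightarrow> (\<exists>s. mod_hom R P (free_mod R (carrier P)) s \<and>
     (\<forall>x\<in>carrier P. finsum P (\<lambda>p. s x p \<odot>\<^bsub>P\<^esub> p) {p. s x p \<noteq> \<zero>\<^bsub>R\<^esub>} = x))"

end

theory Submission
  imports Defs
begin



locale crr = cring R for R :: "'r ring" (structure)
begin

lemma fm_carrier: "f \<in> carrier (free_mod R A) \<longleftrightarrow>
  (\<forall>x. f x \<in> carrier R) \<and> (\<forall>x. x \<notin> A \<longrightarrow> f x = \<zero>) \<and> finite {x. f x \<noteq> \<zero>}"
  by (simp add: free_mod_def)

lemma fm_add [simp]: "f \<oplus>\<^bsub>free_mod R A\<^esub> g = (\<lambda>x. f x \<oplus> g x)"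
  by (simp add: free_mod_def)
lemma fm_zero [simp]: "\<zero>\<^bsub>free_mod R A\<^esub> = (\<lambda>x. \<zero>)"
  by (simp add: free_mod_def)
lemma fm_smult [simp]: "r \<odot>\<^bsub>free_mod R A\<^esub> f = (\<lambda>x. r \<otimes> f x)"
  by (simp add: free_mod_def)

lemma fm_abelian_group: "abelian_group (free_mod R A)"
proof (rule abelian_groupI, goal_cases)
  case (1 x y)
  have "{z. x z \<oplus> y z \<noteq> \<zero>} \<subseteq> {z. x z \<noteq> \<zero>} \<union> {z. y z \<noteq> \<zero>}" using 1 by (auto simp: fm_carrier)
  then show ?case using 1 by (auto simp: fm_carrier intro: finite_subset)
next
  case 2 then show ?case by (simp add: fm_carrier)
next
  case (3 x y z) then show ?case by (auto simp: fm_carrier a_assoc)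
next
  case (4 x y) then show ?case by (auto simp: fm_carrier a_comm)
next
  case (5 x) then show ?case by (auto simp: fm_carrier)
next
  case (6 x)
  have "(\<lambda>z. \<ominus> x z) \<in> carrier (free_mod R A)"
  proof -
    have "{z. \<ominus> x z \<noteq> \<zero>} = {z. x z \<noteq> \<zero>}" using 6 by (auto simp: fm_carrier)
    then show ?thesis using 6 by (auto simp: fm_carrier)
  qed
  moreover have "(\<lambda>z. \<ominus> x z) \<oplus>\<^bsub>free_mod R A\<^esub> x = \<zero>\<^bsub>free_mod R A\<^esub>"
    using 6 by (auto simp: fm_carrier l_neg)
  ultimately show ?case by blast
qed

lemma fm_module: "module R (free_mod R A)"
proof (rule moduleI[OF is_cring fm_abelian_group], goal_cases)
  case (1 a x)
  have "{z. a \<otimes> x z \<noteq> \<zero>} \<subseteq> {z. x z \<noteq> \<zero>}" using 1 by (auto simp: fm_carrier)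
  then show ?case using 1 by (auto simp: fm_carrier intro: finite_subset)
next
  case (2 a b x) then show ?case by (auto simp: fm_carrier l_distr)
next
  case (3 a x y) then show ?case by (auto simp: fm_carrier r_distr)
next
  case (4 a b x) then show ?case by (auto simp: fm_carrier m_assoc)
next
  case (5 x) then show ?case by (auto simp: fm_carrier)
qed

lemma fm_a_inv: "f \<in> carrier (free_mod R A) \<Longrightarrow> \<ominus>\<^bsub>free_mod R A\<^esub> f = (\<lambda>x. \<ominus> f x)"
proof -
  assume f: "f \<in> carrier (free_mod R A)"
  interpret M: abelian_group "free_mod R A" by (rule fm_abelian_group)
  have c: "(\<lambda>z. \<ominus> f z) \<in> carrier (free_mod R A)"
  proof -
    have "{z. \<ominus> f z \<noteq> \<zero>} = {z. f z \<noteq> \<zero>}" using f by (auto simp: fm_carrier)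
    then show ?thesis using f by (auto simp: fm_carrier)
  qed
  have "(\<lambda>z. \<ominus> f z) \<oplus>\<^bsub>free_mod R A\<^esub> f = \<zero>\<^bsub>free_mod R A\<^esub>"
    using f by (auto simp: fm_carrier l_neg)
  then show ?thesis using M.minus_equality[OF _ f c] by simp
qed

lemma fm_minus: "f \<in> carrier (free_mod R A) \<Longrightarrow> g \<in> carrier (free_mod R A) \<Longrightarrow>
   f \<ominus>\<^bsub>free_mod R A\<^esub> g = (\<lambda>x. f x \<ominus> g x)"
  by (simp add: a_minus_def fm_a_inv)

lemma delta_carrier: "p \<in> A \<Longrightarrow> delta R p \<in> carrier (free_mod R A)"
proof -
  assume p: "p \<in> A"
  have "{x. delta R p x \<noteq> \<zero>} \<subseteq> {p}" by (auto simp: delta_def)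
  then show ?thesis using p by (auto simp: fm_carrier delta_def intro: finite_subset)
qed

lemma ring_mod_simps [simp]:
  "carrier (ring_mod R) = carrier R" "x \<oplus>\<^bsub>ring_mod R\<^esub> y = x \<oplus> y"
  "r \<odot>\<^bsub>ring_mod R\<^esub> x = r \<otimes> x" "\<zero>\<^bsub>ring_mod R\<^esub> = \<zero>"
  by (simp_all add: ring_mod_def)

lemma hom_zero:
  assumes M: "module R M" and h: "mod_hom R M (ring_mod R) \<psi>"
  shows "\<psi> \<zero>\<^bsub>M\<^esub> = \<zero>"
proof -
  interpret M: module R M by (rule M)
  have "\<zero> \<odot>\<^bsub>M\<^esub> \<zero>\<^bsub>M\<^esub> = \<zero>\<^bsub>M\<^esub>" by (simp add: M.smult_l_null)
  then have "\<psi> \<zero>\<^bsub>M\<^esub> = \<zero> \<otimes> \<psi> \<zero>\<^bsub>M\<^esub>" using h unfolding mod_hom_def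
    by (metis M.zero_closed ring_mod_simps(3) zero_closed)
  also have "\<dots> = \<zero>" using h unfolding mod_hom_def by (auto simp: Pi_def)
  finally show ?thesis .
qed

lemma hom_inv:
  assumes M: "module R M" and h: "mod_hom R M (ring_mod R) \<psi>" and x: "x \<in> carrier M"
  shows "\<psi> (\<ominus>\<^bsub>M\<^esub> x) = \<ominus> \<psi> x"
proof -
  interpret M: module R M by (rule M)
  have c: "\<psi> x \<in> carrier R" "\<psi> (\<ominus>\<^bsub>M\<^esub> x) \<in> carrier R" using h x unfolding mod_hom_def by auto
  have "\<psi> (\<ominus>\<^bsub>M\<^esub> x) \<oplus> \<psi> x = \<zero>"
    using h x hom_zero[OF M h] unfolding mod_hom_def by (metis M.a_inv_closed M.l_neg ring_mod_simps(2))
  then show ?thesis using minus_equality[OF _ c(1) c(2)] by simp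
qed

lemma hom_minus:
  assumes M: "module R M" and h: "mod_hom R M (ring_mod R) \<psi>" and x: "x \<in> carrier M" and y: "y \<in> carrier M"
  shows "\<psi> (x \<ominus>\<^bsub>M\<^esub> y) = \<psi> x \<ominus> \<psi> y"
proof -
  interpret M: module R M by (rule M)
  show ?thesis using h x y hom_inv[OF M h y] unfolding mod_hom_def a_minus_def
    by (metis M.a_inv_closed ring_mod_simps(2))
qed

lemma hom_carrier: "mod_hom R M (ring_mod R) \<psi> \<Longrightarrow> x \<in> carrier M \<Longrightarrow> \<psi> x \<in> carrier R"
  unfolding mod_hom_def by auto
lemma hom_add: "mod_hom R M (ring_mod R) \<psi> \<Longrightarrow> x \<in> carrier M \<Longrightarrow> y \<in> carrier M \<Longrightarrow>
   \<psi> (x \<oplus>\<^bsub>M\<^esub> y) = \<psi> x \<oplus> \<psi> y"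
  unfolding mod_hom_def by auto
lemma hom_smult: "mod_hom R M (ring_mod R) \<psi> \<Longrightarrow> r \<in> carrier R \<Longrightarrow> x \<in> carrier M \<Longrightarrow>
   \<psi> (r \<odot>\<^bsub>M\<^esub> x) = r \<otimes> \<psi> x"
  unfolding mod_hom_def by auto

lemma fm_ext:
  assumes h1: "mod_hom R (free_mod R A) (ring_mod R) \<psi>1"
    and h2: "mod_hom R (free_mod R A) (ring_mod R) \<psi>2"
    and agree: "\<And>p. p \<in> A \<Longrightarrow> \<psi>1 (delta R p) = \<psi>2 (delta R p)"
    and f: "f \<in> carrier (free_mod R A)"
  shows "\<psi>1 f = \<psi>2 f"
proof -
  have fin: "finite {x. f x \<noteq> \<zero>}" using f by (simp add: fm_carrier)
  have "\<forall>f\<in>carrier (free_mod R A). {x. f x \<noteq> \<zero>} \<subseteq> D \<longrightarrow> \<psi>1 f = \<psi>2 f" if "finite D" for D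
    using that
  proof (induction D rule: finite_induct)
    case empty
    show ?case
    proof (intro ballI impI)
      fix g assume g: "g \<in> carrier (free_mod R A)" "{x. g x \<noteq> \<zero>} \<subseteq> {}"
      then have "g = \<zero>\<^bsub>free_mod R A\<^esub>" by auto
      then show "\<psi>1 g = \<psi>2 g" using hom_zero[OF fm_module h1] hom_zero[OF fm_module h2] by simp
    qed
  next
    case (insert p D)
    show ?case
    proof (intro ballI impI)
      fix g assume g: "g \<in> carrier (free_mod R A)" "{x. g x \<noteq> \<zero>} \<subseteq> insert p D"
      define g0 where "g0 = g(p := \<zero>)"
      have g0c: "g0 \<in> carrier (free_mod R A)"
      proof -
        have "{x. g0 x \<noteq> \<zero>} \<subseteq> {x. g x \<noteq> \<zero>}" by (auto simp: g0_def)
        then show ?thesis using g(1) by (auto simp: fm_carrier g0_def intro: finite_subset)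
      qed
      have g0s: "{x. g0 x \<noteq> \<zero>} \<subseteq> D" using g(2) by (auto simp: g0_def)
      have e0: "\<psi>1 g0 = \<psi>2 g0" using insert.IH g0c g0s by blast
      show "\<psi>1 g = \<psi>2 g"
      proof (cases "p \<in> A")
        case False
        then have "g p = \<zero>" using g(1) by (simp add: fm_carrier)
        then have "g = g0" by (auto simp: g0_def)
        then show ?thesis using e0 by simp
      next
        case True
        have gp: "g p \<in> carrier R" using g(1) by (simp add: fm_carrier)
        have dc: "delta R p \<in> carrier (free_mod R A)" using True by (rule delta_carrier)
        have sc: "g p \<odot>\<^bsub>free_mod R A\<^esub> delta R p \<in> carrier (free_mod R A)"
          using module.smult_closed[OF fm_module gp dc] .
        have geq: "g = g0 \<oplus>\<^bsub>free_mod R A\<^esub> (g p \<odot>\<^bsub>free_mod R A\<^esub> delta R p)"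
          using g(1) by (auto simp: g0_def delta_def fm_carrier fun_eq_iff)
        have "\<psi>1 g = \<psi>1 g0 \<oplus> g p \<otimes> \<psi>1 (delta R p)"
          by (subst geq, simp only: hom_add[OF h1 g0c sc] hom_smult[OF h1 gp dc])
        also have "\<dots> = \<psi>2 g0 \<oplus> g p \<otimes> \<psi>2 (delta R p)" using e0 agree[OF True] by simp
        also have "\<dots> = \<psi>2 g"
          by (subst (2) geq, simp only: hom_add[OF h2 g0c sc] hom_smult[OF h2 gp dc])
        finally show ?thesis .
      qed
    qed
  qed
  then show ?thesis using fin f by blast
qed

end



locale ibf_ctx = crr R for R :: "'r ring" (structure) +
  fixes B :: "('r,'b) module" and \<beta> :: "'b \<Rightarrow> 'b \<Rightarrow> 'r"
  assumes alg: "R_algebra R B" and bil: "bilinear_form R B \<beta>" and inv: "invariant_form B \<beta>"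
begin

abbreviation "S \<equiv> carrier B \<times> carrier B"
abbreviation "F \<equiv> free_mod R S"
abbreviation "bl \<equiv> beta_lin R \<beta>"

lemma F_add_closed: "f \<in> carrier F \<Longrightarrow> g \<in> carrier F \<Longrightarrow> f \<oplus>\<^bsub>F\<^esub> g \<in> carrier F"
  by (rule abelian_monoid.a_closed[OF abelian_group.axioms(1)[OF fm_abelian_group]])

lemma B_mod: "module R B" using alg unfolding R_algebra_def by simp

lemma bcar: "a \<in> carrier B \<Longrightarrow> b \<in> carrier B \<Longrightarrow> \<beta> a b \<in> carrier R"
  using bil unfolding bilinear_form_def by blast

lemma fcar: "f \<in> carrier F \<Longrightarrow> f p \<in> carrier R"
  unfolding fm_carrier by blast
lemma supp_S: "f \<in> carrier F \<Longrightarrow> f p \<noteq> \<zero> \<Longrightarrow> p \<in> S"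
  unfolding fm_carrier by blast
lemma term_car: "f \<in> carrier F \<Longrightarrow> p \<in> S \<Longrightarrow> f p \<otimes> \<beta> (fst p) (snd p) \<in> carrier R"
  using fcar[of f p] by (cases p) (auto intro!: m_closed bcar)

lemma bl_sub:
  assumes f: "f \<in> carrier F" and D: "finite D" "{p. f p \<noteq> \<zero>} \<subseteq> D" "D \<subseteq> S"
  shows "bl f = (\<Oplus>p\<in>D. f p \<otimes> \<beta> (fst p) (snd p))"
  unfolding beta_lin_def
proof (rule add.finprod_mono_neutral_cong_left)
  show "finite D" by fact
  show "{p. f p \<noteq> \<zero>} \<subseteq> D" by fact
  show "\<And>i. i \<in> D - {p. f p \<noteq> \<zero>} \<Longrightarrow> f i \<otimes> \<beta> (fst i) (snd i) = \<zero>"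
  proof -
    fix i assume i: "i \<in> D - {p. f p \<noteq> \<zero>}"
    then have "i \<in> S" using D(3) by auto
    then show "f i \<otimes> \<beta> (fst i) (snd i) = \<zero>" using i by (cases i) (auto intro!: l_null bcar)
  qed
  show "(\<lambda>p. f p \<otimes> \<beta> (fst p) (snd p)) \<in> D \<rightarrow> carrier R"
    using D(3) f by (auto intro!: term_car)
qed simp

lemma bl_carrier: "f \<in> carrier F \<Longrightarrow> bl f \<in> carrier R"
  unfolding beta_lin_def
proof (rule add.finprod_closed, rule funcsetI)
  fix p assume f: "f \<in> carrier F" and p: "p \<in> {p. f p \<noteq> \<zero>}"
  then have "p \<in> S" using supp_S by blast
  then show "f p \<otimes> \<beta> (fst p) (snd p) \<in> carrier R" by (rule term_car[OF f])
qed

lemma supp_sub: "f \<in> carrier F \<Longrightarrow> {p. f p \<noteq> \<zero>} \<subseteq> S"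
  by (auto simp: fm_carrier)
lemma supp_fin: "f \<in> carrier F \<Longrightarrow> finite {p. f p \<noteq> \<zero>}"
  by (auto simp: fm_carrier)

lemma bl_hom: "mod_hom R F (ring_mod R) bl"
  unfolding mod_hom_def
proof (intro conjI ballI)
  show "bl \<in> carrier F \<rightarrow> carrier (ring_mod R)" using bl_carrier by auto
next
  fix f g assume f: "f \<in> carrier F" and g: "g \<in> carrier F"
  let ?D = "{p. f p \<noteq> \<zero>} \<union> {p. g p \<noteq> \<zero>}"
  have D: "finite ?D" "?D \<subseteq> S" using f g supp_sub supp_fin by auto
  have fg: "f \<oplus>\<^bsub>F\<^esub> g \<in> carrier F" using f g F_add_closed by blast
  have "bl (f \<oplus>\<^bsub>F\<^esub> g) = (\<Oplus>p\<in>?D. (f \<oplus>\<^bsub>F\<^esub> g) p \<otimes> \<beta> (fst p) (snd p))"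
    by (rule bl_sub[OF fg D(1) _ D(2)]) (auto)
  also have "\<dots> = (\<Oplus>p\<in>?D. f p \<otimes> \<beta> (fst p) (snd p) \<oplus> g p \<otimes> \<beta> (fst p) (snd p))"
    using D(2) f g by (intro add.finprod_cong') (auto intro!: l_distr bcar term_car simp: fcar[OF f] fcar[OF g])
  also have "\<dots> = (\<Oplus>p\<in>?D. f p \<otimes> \<beta> (fst p) (snd p)) \<oplus> (\<Oplus>p\<in>?D. g p \<otimes> \<beta> (fst p) (snd p))"
    using D(2) f g by (intro finsum_addf) (auto intro!: term_car)
  also have "\<dots> = bl f \<oplus> bl g"
    using bl_sub[OF f D(1) _ D(2)] bl_sub[OF g D(1) _ D(2)] by auto
  finally show "bl (f \<oplus>\<^bsub>F\<^esub> g) = bl f \<oplus>\<^bsub>ring_mod R\<^esub> bl g" by simp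
next
  fix r f assume r: "r \<in> carrier R" and f: "f \<in> carrier F"
  let ?D = "{p. f p \<noteq> \<zero>}"
  have D: "finite ?D" "?D \<subseteq> S" using f supp_sub supp_fin by auto
  have rf: "r \<odot>\<^bsub>F\<^esub> f \<in> carrier F" using module.smult_closed[OF fm_module r f] .
  have "bl (r \<odot>\<^bsub>F\<^esub> f) = (\<Oplus>p\<in>?D. (r \<odot>\<^bsub>F\<^esub> f) p \<otimes> \<beta> (fst p) (snd p))"
    by (rule bl_sub[OF rf D(1) _ D(2)]) (use r in \<open>auto simp: r_null\<close>)
  also have "\<dots> = (\<Oplus>p\<in>?D. r \<otimes> (f p \<otimes> \<beta> (fst p) (snd p)))"
    using D(2) f r by (intro add.finprod_cong') (auto intro!: m_assoc m_closed bcar simp: fcar[OF f] dest: supp_S[OF f])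
  also have "\<dots> = r \<otimes> bl f"
    unfolding beta_lin_def using D f r by (intro finsum_rdistr[symmetric]) (auto intro!: term_car)
  finally show "bl (r \<odot>\<^bsub>F\<^esub> f) = r \<odot>\<^bsub>ring_mod R\<^esub> bl f" by simp
qed

lemma bl_delta: "p \<in> S \<Longrightarrow> bl (delta R p) = \<beta> (fst p) (snd p)"
proof -
  assume p: "p \<in> S"
  have "bl (delta R p) = (\<Oplus>q\<in>{p}. delta R p q \<otimes> \<beta> (fst q) (snd q))"
    by (rule bl_sub[OF delta_carrier[OF p]]) (use p in \<open>auto simp: delta_def\<close>)
  also have "\<dots> = \<beta> (fst p) (snd p)" using p bcar by (auto simp: delta_def)
  finally show ?thesis .
qed

end



lemma gen_submod_least: "submodule H R M \<Longrightarrow> S \<subseteq> H \<Longrightarrow> gen_submod R M S \<subseteq> H"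
  unfolding gen_submod_def by blast

lemma gen_submod_incl: "S \<subseteq> gen_submod R M S"
  unfolding gen_submod_def by blast

lemma gen_submod_sub:
  assumes M: "module R M" and S: "S \<subseteq> carrier M"
  shows "submodule (gen_submod R M S) R M"
proof -
  interpret M: module R M by (rule M)
  let ?Fam = "{H. submodule H R M \<and> S \<subseteq> H}"
  have cm: "carrier M \<in> ?Fam" using M.carrier_is_submodule S by blast
  have z: "\<zero>\<^bsub>M\<^esub> \<in> H" if "submodule H R M" for H
    using subgroup.one_closed[OF submodule.axioms(1)[OF that]] by simp
  show ?thesis unfolding gen_submod_def
  proof (rule M.submoduleI)
    show "\<Inter>?Fam \<subseteq> carrier M" using cm by blast
    show "\<zero>\<^bsub>M\<^esub> \<in> \<Inter>?Fam" using z by blast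
    show "\<ominus>\<^bsub>M\<^esub> a \<in> \<Inter>?Fam" if "a \<in> \<Inter>?Fam" for a
    proof (rule InterI)
      fix H assume "H \<in> ?Fam"
      then show "\<ominus>\<^bsub>M\<^esub> a \<in> H" using that M.submoduleE(3)[of H a] by auto
    qed
    show "a \<oplus>\<^bsub>M\<^esub> b \<in> \<Inter>?Fam" if "a \<in> \<Inter>?Fam" "b \<in> \<Inter>?Fam" for a b
    proof (rule InterI)
      fix H assume "H \<in> ?Fam"
      then show "a \<oplus>\<^bsub>M\<^esub> b \<in> H" using that M.submoduleE(5)[of H a b] by auto
    qed
    show "a \<odot>\<^bsub>M\<^esub> x \<in> \<Inter>?Fam" if "a \<in> carrier R" "x \<in> \<Inter>?Fam" for a x
    proof (rule InterI)
      fix H assume "H \<in> ?Fam"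
      then show "a \<odot>\<^bsub>M\<^esub> x \<in> H" using that M.submoduleE(4)[of H a x] by auto
    qed
  qed
qed

context ibf_ctx
begin

declare fm_add[simp del] fm_smult[simp del] fm_zero[simp del]

abbreviation "N \<equiv> gen_submod R F (ibf_rels R B)"

lemma F_minus_closed: "f \<in> carrier F \<Longrightarrow> g \<in> carrier F \<Longrightarrow> f \<ominus>\<^bsub>F\<^esub> g \<in> carrier F"
  by (rule abelian_group.minus_closed[OF fm_abelian_group])
lemma F_smult_closed: "r \<in> carrier R \<Longrightarrow> f \<in> carrier F \<Longrightarrow> r \<odot>\<^bsub>F\<^esub> f \<in> carrier F"
  by (rule module.smult_closed[OF fm_module])

lemma dc: "a \<in> carrier B \<Longrightarrow> b \<in> carrier B \<Longrightarrow> delta R (a, b) \<in> carrier F"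
  by (rule delta_carrier) simp

lemma Bc: "a \<in> carrier B \<Longrightarrow> b \<in> carrier B \<Longrightarrow> a \<oplus>\<^bsub>B\<^esub> b \<in> carrier B"
  "a \<in> carrier B \<Longrightarrow> b \<in> carrier B \<Longrightarrow> a \<otimes>\<^bsub>B\<^esub> b \<in> carrier B"
  "r \<in> carrier R \<Longrightarrow> a \<in> carrier B \<Longrightarrow> r \<odot>\<^bsub>B\<^esub> a \<in> carrier B"
proof -
  interpret BM: module R B by (rule B_mod)
  show "a \<in> carrier B \<Longrightarrow> b \<in> carrier B \<Longrightarrow> a \<oplus>\<^bsub>B\<^esub> b \<in> carrier B" by simp
  show "a \<in> carrier B \<Longrightarrow> b \<in> carrier B \<Longrightarrow> a \<otimes>\<^bsub>B\<^esub> b \<in> carrier B"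
    using alg unfolding R_algebra_def by blast
  show "r \<in> carrier R \<Longrightarrow> a \<in> carrier B \<Longrightarrow> r \<odot>\<^bsub>B\<^esub> a \<in> carrier B" by simp
qed

lemma rels_carrier: "ibf_rels R B \<subseteq> carrier F"
proof
  fix x assume "x \<in> ibf_rels R B"
  then show "x \<in> carrier F" unfolding ibf_rels_def Let_def
    by (elim UnE CollectE exE conjE) (simp_all add: F_minus_closed F_add_closed F_smult_closed dc Bc)
qed

lemma blm: "f \<in> carrier F \<Longrightarrow> g \<in> carrier F \<Longrightarrow> bl (f \<ominus>\<^bsub>F\<^esub> g) = bl f \<ominus> bl g"
  by (rule hom_minus[OF fm_module bl_hom])
lemma bla: "f \<in> carrier F \<Longrightarrow> g \<in> carrier F \<Longrightarrow> bl (f \<oplus>\<^bsub>F\<^esub> g) = bl f \<oplus> bl g"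
  by (rule hom_add[OF bl_hom])
lemma bls: "r \<in> carrier R \<Longrightarrow> f \<in> carrier F \<Longrightarrow> bl (r \<odot>\<^bsub>F\<^esub> f) = r \<otimes> bl f"
  by (rule hom_smult[OF bl_hom])
lemma bld: "a \<in> carrier B \<Longrightarrow> b \<in> carrier B \<Longrightarrow> bl (delta R (a, b)) = \<beta> a b"
  using bl_delta[of "(a,b)"] by simp

lemma bil_l: "a \<in> carrier B \<Longrightarrow> a' \<in> carrier B \<Longrightarrow> b \<in> carrier B \<Longrightarrow>
    \<beta> (a \<oplus>\<^bsub>B\<^esub> a') b = \<beta> a b \<oplus> \<beta> a' b"
  and bil_r: "a \<in> carrier B \<Longrightarrow> a' \<in> carrier B \<Longrightarrow> b \<in> carrier B \<Longrightarrow>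
    \<beta> b (a \<oplus>\<^bsub>B\<^esub> a') = \<beta> b a \<oplus> \<beta> b a'"
  and bil_sl: "r \<in> carrier R \<Longrightarrow> a \<in> carrier B \<Longrightarrow> b \<in> carrier B \<Longrightarrow> \<beta> (r \<odot>\<^bsub>B\<^esub> a) b = r \<otimes> \<beta> a b"
  and bil_sr: "r \<in> carrier R \<Longrightarrow> a \<in> carrier B \<Longrightarrow> b \<in> carrier B \<Longrightarrow> \<beta> a (r \<odot>\<^bsub>B\<^esub> b) = r \<otimes> \<beta> a b"
  using bil unfolding bilinear_form_def by auto

lemma inv1: "a \<in> carrier B \<Longrightarrow> b \<in> carrier B \<Longrightarrow> c \<in> carrier B \<Longrightarrow>
    \<beta> (a \<otimes>\<^bsub>B\<^esub> b) c = \<beta> a (b \<otimes>\<^bsub>B\<^esub> c)"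
  and inv2: "a \<in> carrier B \<Longrightarrow> b \<in> carrier B \<Longrightarrow> c \<in> carrier B \<Longrightarrow>
    \<beta> (a \<otimes>\<^bsub>B\<^esub> b) c = \<beta> b (c \<otimes>\<^bsub>B\<^esub> a)"
  using inv unfolding invariant_form_def by auto

lemma self_minus: "x \<in> carrier R \<Longrightarrow> x \<ominus> x = \<zero>"
  by (simp add: minus_eq r_neg)

lemma rels_ker: "x \<in> ibf_rels R B \<Longrightarrow> bl x = \<zero>"
  unfolding ibf_rels_def Let_def
proof (elim UnE CollectE exE conjE)
  fix a a' b assume x: "x = delta R (a \<oplus>\<^bsub>B\<^esub> a', b) \<ominus>\<^bsub>F\<^esub> (delta R (a, b) \<oplus>\<^bsub>F\<^esub> delta R (a', b))"
    and h: "a \<in> carrier B" "a' \<in> carrier B" "b \<in> carrier B"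
  show "bl x = \<zero>" unfolding x using h
    by (simp add: blm bla F_add_closed dc Bc bld bil_l self_minus bcar)
next
  fix a b b' assume x: "x = delta R (a, b \<oplus>\<^bsub>B\<^esub> b') \<ominus>\<^bsub>F\<^esub> (delta R (a, b) \<oplus>\<^bsub>F\<^esub> delta R (a, b'))"
    and h: "a \<in> carrier B" "b \<in> carrier B" "b' \<in> carrier B"
  show "bl x = \<zero>" unfolding x using h
    by (simp add: blm bla F_add_closed dc Bc bld bil_r self_minus bcar)
next
  fix r a b assume x: "x = delta R (r \<odot>\<^bsub>B\<^esub> a, b) \<ominus>\<^bsub>F\<^esub> (r \<odot>\<^bsub>F\<^esub> delta R (a, b))"
    and h: "r \<in> carrier R" "a \<in> carrier B" "b \<in> carrier B"
  show "bl x = \<zero>" unfolding x using h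
    by (simp add: blm bls F_smult_closed dc Bc bld bil_sl self_minus bcar)
next
  fix r a b assume x: "x = delta R (a, r \<odot>\<^bsub>B\<^esub> b) \<ominus>\<^bsub>F\<^esub> (r \<odot>\<^bsub>F\<^esub> delta R (a, b))"
    and h: "r \<in> carrier R" "a \<in> carrier B" "b \<in> carrier B"
  show "bl x = \<zero>" unfolding x using h
    by (simp add: blm bls F_smult_closed dc Bc bld bil_sr self_minus bcar)
next
  fix a b c assume x: "x = delta R (a \<otimes>\<^bsub>B\<^esub> b, c) \<ominus>\<^bsub>F\<^esub> delta R (a, b \<otimes>\<^bsub>B\<^esub> c)"
    and h: "a \<in> carrier B" "b \<in> carrier B" "c \<in> carrier B"
  show "bl x = \<zero>" unfolding x using h
    by (simp add: blm dc Bc bld inv1 self_minus bcar)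
next
  fix a b c assume x: "x = delta R (a \<otimes>\<^bsub>B\<^esub> b, c) \<ominus>\<^bsub>F\<^esub> delta R (b, c \<otimes>\<^bsub>B\<^esub> a)"
    and h: "a \<in> carrier B" "b \<in> carrier B" "c \<in> carrier B"
  show "bl x = \<zero>" unfolding x using h
    by (simp add: blm dc Bc bld inv2 self_minus bcar)
qed

lemma ker_submod: "submodule {f \<in> carrier F. bl f = \<zero>} R F"
proof (rule module.submoduleI[OF fm_module])
  show "{f \<in> carrier F. bl f = \<zero>} \<subseteq> carrier F" by blast
  show "\<zero>\<^bsub>F\<^esub> \<in> {f \<in> carrier F. bl f = \<zero>}"
    using hom_zero[OF fm_module bl_hom] abelian_monoid.zero_closed[OF abelian_group.axioms(1)[OF fm_abelian_group]]
    by simp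
  show "\<ominus>\<^bsub>F\<^esub> a \<in> {f \<in> carrier F. bl f = \<zero>}" if "a \<in> {f \<in> carrier F. bl f = \<zero>}" for a
    using that hom_inv[OF fm_module bl_hom] abelian_group.a_inv_closed[OF fm_abelian_group] by auto
  show "a \<oplus>\<^bsub>F\<^esub> b \<in> {f \<in> carrier F. bl f = \<zero>}" if "a \<in> {f \<in> carrier F. bl f = \<zero>}" "b \<in> {f \<in> carrier F. bl f = \<zero>}" for a b
    using that bla F_add_closed by auto
  show "r \<odot>\<^bsub>F\<^esub> x \<in> {f \<in> carrier F. bl f = \<zero>}" if "r \<in> carrier R" "x \<in> {f \<in> carrier F. bl f = \<zero>}" for r x
    using that bls F_smult_closed by (auto simp: r_null)
qed

lemma N_submod: "submodule N R F"
  by (rule gen_submod_sub[OF fm_module rels_carrier])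

lemma rels_K: "ibf_rels R B \<subseteq> {f \<in> carrier F. bl f = \<zero>}"
proof
  fix x assume "x \<in> ibf_rels R B"
  then show "x \<in> {f \<in> carrier F. bl f = \<zero>}" using rels_ker[of x] rels_carrier by auto
qed

lemma N_ker: "n \<in> N \<Longrightarrow> bl n = \<zero>"
proof -
  assume n: "n \<in> N"
  have "N \<subseteq> {f \<in> carrier F. bl f = \<zero>}" by (rule gen_submod_least[OF ker_submod rels_K])
  then show ?thesis using n by auto
qed

lemma rels_N: "ibf_rels R B \<subseteq> N" by (rule gen_submod_incl)

lemma N_carrier: "N \<subseteq> carrier F"
  using module.submoduleE(1)[OF fm_module N_submod] .

lemma N_absg: "abelian_subgroup N F"
  by (rule abelian_subgroupI3[OF _ fm_abelian_group])
     (rule additive_subgroup.intro[OF submodule.axioms(1)[OF N_submod]])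

end



context ibf_ctx
begin

abbreviation "cls f \<equiv> N +>\<^bsub>F\<^esub> f"
abbreviation "IB \<equiv> IBF R B"

lemma IB_simps:
  "carrier IB = a_rcosets\<^bsub>F\<^esub> N"
  "X \<oplus>\<^bsub>IB\<^esub> Y = X <+>\<^bsub>F\<^esub> Y"
  "r \<odot>\<^bsub>IB\<^esub> X = N <+>\<^bsub>F\<^esub> ((\<lambda>x. r \<odot>\<^bsub>F\<^esub> x) ` X)"
  "\<zero>\<^bsub>IB\<^esub> = N"
  by (simp_all add: IBF_def quot_mod_def Let_def)

lemma IB_carrier: "X \<in> carrier IB \<longleftrightarrow> (\<exists>f\<in>carrier F. X = cls f)"
  unfolding IB_simps by (auto simp: A_RCOSETS_def RCOSETS_def a_r_coset_def)

lemma cls_carrier: "f \<in> carrier F \<Longrightarrow> cls f \<in> carrier IB"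
  using IB_carrier by blast

lemma cls_add: "f \<in> carrier F \<Longrightarrow> g \<in> carrier F \<Longrightarrow> cls f \<oplus>\<^bsub>IB\<^esub> cls g = cls (f \<oplus>\<^bsub>F\<^esub> g)"
  unfolding IB_simps by (rule abelian_subgroup.a_rcos_sum[OF N_absg])

lemma mem_rcos: "z \<in> X +>\<^bsub>F\<^esub> a \<longleftrightarrow> (\<exists>h\<in>X. z = h \<oplus>\<^bsub>F\<^esub> a)"
  unfolding a_r_coset_def'[of F] by blast

lemma mem_sadd: "z \<in> X <+>\<^bsub>F\<^esub> Y \<longleftrightarrow> (\<exists>h\<in>X. \<exists>k\<in>Y. z = h \<oplus>\<^bsub>F\<^esub> k)"
  unfolding set_add_def'[of F] by blast

lemma cls_smult:
  assumes r: "r \<in> carrier R" and f: "f \<in> carrier F"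
  shows "r \<odot>\<^bsub>IB\<^esub> cls f = cls (r \<odot>\<^bsub>F\<^esub> f)"
proof -
  interpret FM: module R F by (rule fm_module)
  have Nsub: "submodule N R F" by (rule N_submod)
  have Nc: "\<And>n. n \<in> N \<Longrightarrow> n \<in> carrier F" using N_carrier by blast
  have Nadd: "\<And>n m. n \<in> N \<Longrightarrow> m \<in> N \<Longrightarrow> n \<oplus>\<^bsub>F\<^esub> m \<in> N" using FM.submoduleE(5)[OF Nsub] by blast
  have Nsm: "\<And>s n. s \<in> carrier R \<Longrightarrow> n \<in> N \<Longrightarrow> s \<odot>\<^bsub>F\<^esub> n \<in> N" using FM.submoduleE(4)[OF Nsub] by blast
  have N0: "\<zero>\<^bsub>F\<^esub> \<in> N" using subgroup.one_closed[OF submodule.axioms(1)[OF Nsub]] by simp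
  show ?thesis
    unfolding IB_simps
  proof (intro equalityI subsetI)
    fix z assume "z \<in> N <+>\<^bsub>F\<^esub> (\<lambda>x. r \<odot>\<^bsub>F\<^esub> x) ` cls f"
    then obtain n k where nk: "n \<in> N" "k \<in> (\<lambda>x. r \<odot>\<^bsub>F\<^esub> x) ` cls f" "z = n \<oplus>\<^bsub>F\<^esub> k"
      unfolding mem_sadd by blast
    then obtain y where y: "y \<in> cls f" "k = r \<odot>\<^bsub>F\<^esub> y" by blast
    then obtain m where m: "m \<in> N" "y = m \<oplus>\<^bsub>F\<^esub> f" unfolding mem_rcos by blast
    have mc: "m \<in> carrier F" "n \<in> carrier F" using Nc m(1) nk(1) by auto
    have "z = n \<oplus>\<^bsub>F\<^esub> (r \<odot>\<^bsub>F\<^esub> m \<oplus>\<^bsub>F\<^esub> r \<odot>\<^bsub>F\<^esub> f)"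
      using nk(3) y(2) m(2) FM.smult_r_distr[OF r mc(1) f] by simp
    also have "\<dots> = (n \<oplus>\<^bsub>F\<^esub> r \<odot>\<^bsub>F\<^esub> m) \<oplus>\<^bsub>F\<^esub> (r \<odot>\<^bsub>F\<^esub> f)"
      using FM.a_assoc[OF mc(2) FM.smult_closed[OF r mc(1)] FM.smult_closed[OF r f]] by simp
    finally have zz: "z = (n \<oplus>\<^bsub>F\<^esub> r \<odot>\<^bsub>F\<^esub> m) \<oplus>\<^bsub>F\<^esub> (r \<odot>\<^bsub>F\<^esub> f)" .
    have "n \<oplus>\<^bsub>F\<^esub> r \<odot>\<^bsub>F\<^esub> m \<in> N" using Nadd[OF nk(1) Nsm[OF r m(1)]] .
    then show "z \<in> cls (r \<odot>\<^bsub>F\<^esub> f)" unfolding mem_rcos using zz by blast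
  next
    fix z assume "z \<in> cls (r \<odot>\<^bsub>F\<^esub> f)"
    then obtain n where n: "n \<in> N" "z = n \<oplus>\<^bsub>F\<^esub> r \<odot>\<^bsub>F\<^esub> f" unfolding mem_rcos by blast
    have "f \<in> cls f" unfolding mem_rcos using N0 f by force
    then have "r \<odot>\<^bsub>F\<^esub> f \<in> (\<lambda>x. r \<odot>\<^bsub>F\<^esub> x) ` cls f" by (rule imageI)
    then show "z \<in> N <+>\<^bsub>F\<^esub> (\<lambda>x. r \<odot>\<^bsub>F\<^esub> x) ` cls f" unfolding mem_sadd using n by blast
  qed
qed

lemma cls_eq:
  assumes f: "f \<in> carrier F" and g: "g \<in> carrier F"
  shows "cls f = cls g \<longleftrightarrow> f \<ominus>\<^bsub>F\<^esub> g \<in> N"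
proof -
  interpret NA: abelian_subgroup N F by (rule N_absg)
  show ?thesis
  proof
    assume "cls f = cls g"
    then have "f \<in> cls g" using NA.a_rcos_self[OF f] by simp
    then show "f \<ominus>\<^bsub>F\<^esub> g \<in> N" using NA.a_rcos_module[OF g f] by (simp add: NA.minus_eq)
  next
    assume "f \<ominus>\<^bsub>F\<^esub> g \<in> N"
    then have "f \<in> cls g" using NA.a_rcos_module[OF g f] by (simp add: NA.minus_eq)
    then show "cls f = cls g" using NA.a_repr_independence'[OF _ g] by simp
  qed
qed

lemma cls_N:
  assumes f: "f \<in> carrier F"
  shows "cls f = N \<longleftrightarrow> f \<in> N"
proof -
  interpret NA: abelian_subgroup N F by (rule N_absg)
  show ?thesis using NA.a_rcos_const NA.a_rcos_self[OF f] by auto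
qed

lemma bb_cls:
  assumes f: "f \<in> carrier F"
  shows "beta_bar R \<beta> (cls f) = bl f"
proof -
  have "bl ` cls f = {bl f}"
  proof (intro equalityI subsetI)
    fix y assume "y \<in> bl ` cls f"
    then obtain n where n: "n \<in> N" "y = bl (n \<oplus>\<^bsub>F\<^esub> f)"
      unfolding a_r_coset_def'[of F] by blast
    then have "y = bl n \<oplus> bl f" using bla N_carrier f by blast
    then show "y \<in> {bl f}" using N_ker[OF n(1)] bl_carrier[OF f] by simp
  next
    fix y assume "y \<in> {bl f}"
    interpret NA: abelian_subgroup N F by (rule N_absg)
    show "y \<in> bl ` cls f" using NA.a_rcos_self[OF f] \<open>y \<in> {bl f}\<close> by blast
  qed
  then show ?thesis unfolding beta_bar_def by simp
qed

end



context ibf_ctx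
begin

lemma rel1: assumes "a \<in> carrier B" "a' \<in> carrier B" "b \<in> carrier B"
  shows "delta R (a \<oplus>\<^bsub>B\<^esub> a', b) \<ominus>\<^bsub>F\<^esub> (delta R (a, b) \<oplus>\<^bsub>F\<^esub> delta R (a', b)) \<in> N"
proof (rule subsetD[OF rels_N])
  show "delta R (a \<oplus>\<^bsub>B\<^esub> a', b) \<ominus>\<^bsub>F\<^esub> (delta R (a, b) \<oplus>\<^bsub>F\<^esub> delta R (a', b)) \<in> ibf_rels R B"
    unfolding ibf_rels_def Let_def by (rule UnI1, rule UnI1, rule UnI1, rule UnI1, rule UnI1) (use assms in blast)
qed

lemma rel2: assumes "a \<in> carrier B" "b \<in> carrier B" "b' \<in> carrier B"
  shows "delta R (a, b \<oplus>\<^bsub>B\<^esub> b') \<ominus>\<^bsub>F\<^esub> (delta R (a, b) \<oplus>\<^bsub>F\<^esub> delta R (a, b')) \<in> N"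
proof (rule subsetD[OF rels_N])
  show "delta R (a, b \<oplus>\<^bsub>B\<^esub> b') \<ominus>\<^bsub>F\<^esub> (delta R (a, b) \<oplus>\<^bsub>F\<^esub> delta R (a, b')) \<in> ibf_rels R B"
    unfolding ibf_rels_def Let_def by (rule UnI1, rule UnI1, rule UnI1, rule UnI1, rule UnI2) (use assms in blast)
qed

lemma rel3: assumes "r \<in> carrier R" "a \<in> carrier B" "b \<in> carrier B"
  shows "delta R (r \<odot>\<^bsub>B\<^esub> a, b) \<ominus>\<^bsub>F\<^esub> (r \<odot>\<^bsub>F\<^esub> delta R (a, b)) \<in> N"
proof (rule subsetD[OF rels_N])
  show "delta R (r \<odot>\<^bsub>B\<^esub> a, b) \<ominus>\<^bsub>F\<^esub> (r \<odot>\<^bsub>F\<^esub> delta R (a, b)) \<in> ibf_rels R B"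
    unfolding ibf_rels_def Let_def by (rule UnI1, rule UnI1, rule UnI1, rule UnI2) (use assms in blast)
qed

lemma rel4: assumes "r \<in> carrier R" "a \<in> carrier B" "b \<in> carrier B"
  shows "delta R (a, r \<odot>\<^bsub>B\<^esub> b) \<ominus>\<^bsub>F\<^esub> (r \<odot>\<^bsub>F\<^esub> delta R (a, b)) \<in> N"
proof (rule subsetD[OF rels_N])
  show "delta R (a, r \<odot>\<^bsub>B\<^esub> b) \<ominus>\<^bsub>F\<^esub> (r \<odot>\<^bsub>F\<^esub> delta R (a, b)) \<in> ibf_rels R B"
    unfolding ibf_rels_def Let_def by (rule UnI1, rule UnI1, rule UnI2) (use assms in blast)
qed

lemma rel5: assumes "a \<in> carrier B" "b \<in> carrier B" "c \<in> carrier B"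
  shows "delta R (a \<otimes>\<^bsub>B\<^esub> b, c) \<ominus>\<^bsub>F\<^esub> delta R (a, b \<otimes>\<^bsub>B\<^esub> c) \<in> N"
proof (rule subsetD[OF rels_N])
  show "delta R (a \<otimes>\<^bsub>B\<^esub> b, c) \<ominus>\<^bsub>F\<^esub> delta R (a, b \<otimes>\<^bsub>B\<^esub> c) \<in> ibf_rels R B"
    unfolding ibf_rels_def Let_def by (rule UnI1, rule UnI2) (use assms in blast)
qed

lemma rel6: assumes "a \<in> carrier B" "b \<in> carrier B" "c \<in> carrier B"
  shows "delta R (a \<otimes>\<^bsub>B\<^esub> b, c) \<ominus>\<^bsub>F\<^esub> delta R (b, c \<otimes>\<^bsub>B\<^esub> a) \<in> N"
proof (rule subsetD[OF rels_N])
  show "delta R (a \<otimes>\<^bsub>B\<^esub> b, c) \<ominus>\<^bsub>F\<^esub> delta R (b, c \<otimes>\<^bsub>B\<^esub> a) \<in> ibf_rels R B"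
    unfolding ibf_rels_def Let_def by (rule UnI2) (use assms in blast)
qed

context
  fixes \<phi> assumes ph: "mod_hom R IB (ring_mod R) \<phi>"
begin

definition "\<gamma> a b = \<phi> (cls (delta R (a, b)))"

lemma psi_hom: "mod_hom R F (ring_mod R) (\<lambda>f. \<phi> (cls f))"
  unfolding mod_hom_def
proof (intro conjI ballI funcsetI)
  show "\<phi> (cls f) \<in> carrier (ring_mod R)" if "f \<in> carrier F" for f
    using hom_carrier[OF ph cls_carrier[OF that]] by simp
  show "\<phi> (cls (f \<oplus>\<^bsub>F\<^esub> g)) = \<phi> (cls f) \<oplus>\<^bsub>ring_mod R\<^esub> \<phi> (cls g)" if "f \<in> carrier F" "g \<in> carrier F" for f g
    using hom_add[OF ph cls_carrier[OF that(1)] cls_carrier[OF that(2)]] cls_add[OF that] by simp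
  show "\<phi> (cls (r \<odot>\<^bsub>F\<^esub> f)) = r \<odot>\<^bsub>ring_mod R\<^esub> \<phi> (cls f)" if "r \<in> carrier R" "f \<in> carrier F" for r f
    using hom_smult[OF ph that(1) cls_carrier[OF that(2)]] cls_smult[OF that] by simp
qed

lemma psi_N: assumes "f \<in> carrier F" "g \<in> carrier F" "f \<ominus>\<^bsub>F\<^esub> g \<in> N" shows "\<phi> (cls f) = \<phi> (cls g)"
  using cls_eq[OF assms(1,2)] assms(3) by simp

lemma psi_add: "f \<in> carrier F \<Longrightarrow> g \<in> carrier F \<Longrightarrow> \<phi> (cls (f \<oplus>\<^bsub>F\<^esub> g)) = \<phi> (cls f) \<oplus> \<phi> (cls g)"
  using hom_add[OF psi_hom] by simp
lemma psi_smult: "r \<in> carrier R \<Longrightarrow> f \<in> carrier F \<Longrightarrow> \<phi> (cls (r \<odot>\<^bsub>F\<^esub> f)) = r \<otimes> \<phi> (cls f)"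
  using hom_smult[OF psi_hom] by simp

lemma gamma_car: "a \<in> carrier B \<Longrightarrow> b \<in> carrier B \<Longrightarrow> \<gamma> a b \<in> carrier R"
  unfolding \<gamma>_def using hom_carrier[OF psi_hom dc] by simp

lemma gamma_l: "a \<in> carrier B \<Longrightarrow> a' \<in> carrier B \<Longrightarrow> b \<in> carrier B \<Longrightarrow>
    \<gamma> (a \<oplus>\<^bsub>B\<^esub> a') b = \<gamma> a b \<oplus> \<gamma> a' b"
  unfolding \<gamma>_def by (subst psi_N[OF _ _ rel1]) (auto simp: dc Bc F_add_closed psi_add)
lemma gamma_r: "a \<in> carrier B \<Longrightarrow> b \<in> carrier B \<Longrightarrow> b' \<in> carrier B \<Longrightarrow>
    \<gamma> a (b \<oplus>\<^bsub>B\<^esub> b') = \<gamma> a b \<oplus> \<gamma> a b'"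
  unfolding \<gamma>_def by (subst psi_N[OF _ _ rel2]) (auto simp: dc Bc F_add_closed psi_add)
lemma gamma_sl: "r \<in> carrier R \<Longrightarrow> a \<in> carrier B \<Longrightarrow> b \<in> carrier B \<Longrightarrow>
    \<gamma> (r \<odot>\<^bsub>B\<^esub> a) b = r \<otimes> \<gamma> a b"
  unfolding \<gamma>_def by (subst psi_N[OF _ _ rel3]) (auto simp: dc Bc F_smult_closed psi_smult)
lemma gamma_sr: "r \<in> carrier R \<Longrightarrow> a \<in> carrier B \<Longrightarrow> b \<in> carrier B \<Longrightarrow>
    \<gamma> a (r \<odot>\<^bsub>B\<^esub> b) = r \<otimes> \<gamma> a b"
  unfolding \<gamma>_def by (subst psi_N[OF _ _ rel4]) (auto simp: dc Bc F_smult_closed psi_smult)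
lemma gamma_inv1: "a \<in> carrier B \<Longrightarrow> b \<in> carrier B \<Longrightarrow> c \<in> carrier B \<Longrightarrow>
    \<gamma> (a \<otimes>\<^bsub>B\<^esub> b) c = \<gamma> a (b \<otimes>\<^bsub>B\<^esub> c)"
  unfolding \<gamma>_def by (rule psi_N[OF _ _ rel5]) (auto simp: dc Bc)
lemma gamma_inv2: "a \<in> carrier B \<Longrightarrow> b \<in> carrier B \<Longrightarrow> c \<in> carrier B \<Longrightarrow>
    \<gamma> (a \<otimes>\<^bsub>B\<^esub> b) c = \<gamma> b (c \<otimes>\<^bsub>B\<^esub> a)"
  unfolding \<gamma>_def by (rule psi_N[OF _ _ rel6]) (auto simp: dc Bc)


context
  assumes ns: "nonsingular R B \<beta>" and ce: "central R B"
begin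

abbreviation "\<Phi> \<equiv> (\<lambda>b. \<lambda>c\<in>carrier B. \<beta> b c)"

lemma g_dual: "b \<in> carrier B \<Longrightarrow> (\<lambda>c\<in>carrier B. \<gamma> b c) \<in> dual_mod R B"
  unfolding dual_mod_def mod_hom_def
  by (auto simp: gamma_car gamma_r gamma_sr Bc)

definition "\<chi> = (\<lambda>b\<in>carrier B. SOME y. y \<in> carrier B \<and> \<Phi> y = (\<lambda>c\<in>carrier B. \<gamma> b c))"

lemma chi_prop: assumes b: "b \<in> carrier B"
  shows "\<chi> b \<in> carrier B" "\<And>c. c \<in> carrier B \<Longrightarrow> \<beta> (\<chi> b) c = \<gamma> b c"
proof -
  define g where "g = (\<lambda>c\<in>carrier B. \<gamma> b c)"
  have im: "\<Phi> ` carrier B = dual_mod R B" using ns unfolding nonsingular_def bij_betw_def by (rule conjunct2)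
  have "g \<in> \<Phi> ` carrier B" unfolding im g_def by (rule g_dual[OF b])
  then obtain y where y: "y \<in> carrier B" "\<Phi> y = g" by (rule imageE) (rule that, assumption, rule sym)
  then have ex: "\<exists>y. y \<in> carrier B \<and> \<Phi> y = g" by blast
  have cb: "\<chi> b = (SOME y. y \<in> carrier B \<and> \<Phi> y = g)" unfolding \<chi>_def g_def using b by (rule restrict_apply')
  have P: "\<chi> b \<in> carrier B \<and> \<Phi> (\<chi> b) = g"
    unfolding cb by (rule someI_ex[OF ex])
  then show "\<chi> b \<in> carrier B" by (rule conjunct1)
  fix c assume c: "c \<in> carrier B"
  have "\<Phi> (\<chi> b) c = g c" using P by (simp only:)
  then show "\<beta> (\<chi> b) c = \<gamma> b c" using c unfolding g_def by simp
qed

lemma uniq: assumes "y \<in> carrier B" "z \<in> carrier B" "\<And>c. c \<in> carrier B \<Longrightarrow> \<beta> y c = \<beta> z c"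
  shows "y = z"
proof -
  have "\<Phi> y = \<Phi> z" using assms(3) by (auto simp: fun_eq_iff)
  then show ?thesis using ns assms(1,2) unfolding nonsingular_def bij_betw_def inj_on_def by blast
qed

lemma chi_eq: assumes "b \<in> carrier B" "y \<in> carrier B" "\<And>c. c \<in> carrier B \<Longrightarrow> \<beta> y c = \<gamma> b c"
  shows "\<chi> b = y"
  using uniq[OF chi_prop(1)[OF assms(1)] assms(2)] chi_prop(2)[OF assms(1)] assms(3) by simp

lemma chi_centroid: "\<chi> \<in> centroid R B"
  unfolding centroid_def mem_Collect_eq
proof (intro conjI)
  show "\<chi> \<in> extensional (carrier B)" unfolding \<chi>_def by simp
  show "mod_hom R B B \<chi>"
    unfolding mod_hom_def
  proof (intro conjI ballI funcsetI)
    show "\<chi> x \<in> carrier B" if "x \<in> carrier B" for x using chi_prop(1)[OF that] .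
    show "\<chi> (x \<oplus>\<^bsub>B\<^esub> y) = \<chi> x \<oplus>\<^bsub>B\<^esub> \<chi> y" if "x \<in> carrier B" "y \<in> carrier B" for x y
      using that by (intro chi_eq) (auto simp: Bc chi_prop bil_l gamma_l)
    show "\<chi> (r \<odot>\<^bsub>B\<^esub> x) = r \<odot>\<^bsub>B\<^esub> \<chi> x" if "r \<in> carrier R" "x \<in> carrier B" for r x
      using that by (intro chi_eq) (auto simp: Bc chi_prop bil_sl gamma_sl)
  qed
  show "\<forall>a\<in>carrier B. \<forall>b\<in>carrier B. \<chi> (a \<otimes>\<^bsub>B\<^esub> b) = a \<otimes>\<^bsub>B\<^esub> \<chi> b \<and> \<chi> (a \<otimes>\<^bsub>B\<^esub> b) = \<chi> a \<otimes>\<^bsub>B\<^esub> b"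
  proof (intro ballI conjI)
    fix a b assume ab: "a \<in> carrier B" "b \<in> carrier B"
    show "\<chi> (a \<otimes>\<^bsub>B\<^esub> b) = a \<otimes>\<^bsub>B\<^esub> \<chi> b"
    proof (rule chi_eq)
      fix c assume c: "c \<in> carrier B"
      have "\<beta> (a \<otimes>\<^bsub>B\<^esub> \<chi> b) c = \<beta> (\<chi> b) (c \<otimes>\<^bsub>B\<^esub> a)" using inv2 ab c chi_prop by simp
      also have "\<dots> = \<gamma> b (c \<otimes>\<^bsub>B\<^esub> a)" using chi_prop ab c Bc by simp
      also have "\<dots> = \<gamma> (a \<otimes>\<^bsub>B\<^esub> b) c" using gamma_inv2 ab c by simp
      finally show "\<beta> (a \<otimes>\<^bsub>B\<^esub> \<chi> b) c = \<gamma> (a \<otimes>\<^bsub>B\<^esub> b) c" .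
    qed (use ab Bc chi_prop in auto)
    show "\<chi> (a \<otimes>\<^bsub>B\<^esub> b) = \<chi> a \<otimes>\<^bsub>B\<^esub> b"
    proof (rule chi_eq)
      fix c assume c: "c \<in> carrier B"
      have "\<beta> (\<chi> a \<otimes>\<^bsub>B\<^esub> b) c = \<beta> (\<chi> a) (b \<otimes>\<^bsub>B\<^esub> c)" using inv1 ab c chi_prop by simp
      also have "\<dots> = \<gamma> a (b \<otimes>\<^bsub>B\<^esub> c)" using chi_prop ab c Bc by simp
      also have "\<dots> = \<gamma> (a \<otimes>\<^bsub>B\<^esub> b) c" using gamma_inv1 ab c by simp
      finally show "\<beta> (\<chi> a \<otimes>\<^bsub>B\<^esub> b) c = \<gamma> (a \<otimes>\<^bsub>B\<^esub> b) c" .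
    qed (use ab Bc chi_prop in auto)
  qed
qed

lemma factor: "\<exists>r\<in>carrier R. \<forall>f\<in>carrier F. \<phi> (cls f) = r \<otimes> bl f"
proof -
  have "\<chi> \<in> (\<lambda>r. \<lambda>b\<in>carrier B. r \<odot>\<^bsub>B\<^esub> b) ` carrier R"
    using chi_centroid ce unfolding central_def bij_betw_def by simp
  then obtain r where r: "r \<in> carrier R" "\<chi> = (\<lambda>b\<in>carrier B. r \<odot>\<^bsub>B\<^esub> b)" by blast
  have gam: "\<gamma> a b = r \<otimes> \<beta> a b" if "a \<in> carrier B" "b \<in> carrier B" for a b
  proof -
    have "\<gamma> a b = \<beta> (\<chi> a) b" using chi_prop(2) that by simp
    also have "\<dots> = \<beta> (r \<odot>\<^bsub>B\<^esub> a) b" using r(2) that by simp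
    also have "\<dots> = r \<otimes> \<beta> a b" using bil_sl r(1) that by simp
    finally show ?thesis .
  qed
  have h2: "mod_hom R F (ring_mod R) (\<lambda>f. r \<otimes> bl f)"
    unfolding mod_hom_def
  proof (intro conjI ballI funcsetI)
    show "r \<otimes> bl f \<in> carrier (ring_mod R)" if "f \<in> carrier F" for f using r bl_carrier[OF that] by simp
    show "r \<otimes> bl (f \<oplus>\<^bsub>F\<^esub> g) = r \<otimes> bl f \<oplus>\<^bsub>ring_mod R\<^esub> r \<otimes> bl g" if "f \<in> carrier F" "g \<in> carrier F" for f g
      using that r bla bl_carrier by (simp add: r_distr)
    show "r \<otimes> bl (s \<odot>\<^bsub>F\<^esub> f) = s \<odot>\<^bsub>ring_mod R\<^esub> (r \<otimes> bl f)" if "s \<in> carrier R" "f \<in> carrier F" for s f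
      using that r bls bl_carrier by (simp add: m_lcomm)
  qed
  have "\<forall>f\<in>carrier F. \<phi> (cls f) = r \<otimes> bl f"
  proof
    fix f assume f: "f \<in> carrier F"
    show "\<phi> (cls f) = r \<otimes> bl f"
    proof (rule fm_ext[OF psi_hom h2 _ f])
      fix p assume p: "p \<in> S"
      then obtain a b where ab: "p = (a, b)" "a \<in> carrier B" "b \<in> carrier B" by blast
      show "\<phi> (cls (delta R p)) = r \<otimes> bl (delta R p)"
        using gam[OF ab(2,3)] bld[OF ab(2,3)] ab(1) unfolding \<gamma>_def by simp
    qed
  qed
  then show ?thesis using r(1) by blast
qed

end
end
end



context ibf_ctx
begin

lemma IB_elim: assumes "X \<in> carrier IB" obtains f where "f \<in> carrier F" "X = cls f"
  using assms IB_carrier by blast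

lemma bb_hom: "mod_hom R IB (ring_mod R) (beta_bar R \<beta>)"
  unfolding mod_hom_def
proof (intro conjI ballI funcsetI)
  fix X assume "X \<in> carrier IB"
  then obtain f where f: "f \<in> carrier F" "X = cls f" by (rule IB_elim)
  show "beta_bar R \<beta> X \<in> carrier (ring_mod R)" using f bb_cls bl_carrier by simp
next
  fix X Y assume "X \<in> carrier IB" "Y \<in> carrier IB"
  then obtain f g where f: "f \<in> carrier F" "X = cls f" and g: "g \<in> carrier F" "Y = cls g"
    by (metis IB_elim)
  show "beta_bar R \<beta> (X \<oplus>\<^bsub>IB\<^esub> Y) = beta_bar R \<beta> X \<oplus>\<^bsub>ring_mod R\<^esub> beta_bar R \<beta> Y"
    using f g cls_add[OF f(1) g(1)] bb_cls F_add_closed bla by simp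
next
  fix r X assume r: "r \<in> carrier R" and "X \<in> carrier IB"
  then obtain f where f: "f \<in> carrier F" "X = cls f" by (metis IB_elim)
  show "beta_bar R \<beta> (r \<odot>\<^bsub>IB\<^esub> X) = r \<odot>\<^bsub>ring_mod R\<^esub> beta_bar R \<beta> X"
    using f r cls_smult[OF r f(1)] bb_cls F_smult_closed bls by simp
qed

lemma N_in_IB: "N \<in> carrier IB"
proof -
  have z: "\<zero>\<^bsub>F\<^esub> \<in> carrier F" by (rule abelian_monoid.zero_closed[OF abelian_group.axioms(1)[OF fm_abelian_group]])
  have "\<zero>\<^bsub>F\<^esub> \<in> N" using subgroup.one_closed[OF submodule.axioms(1)[OF N_submod]] by simp
  then have "cls \<zero>\<^bsub>F\<^esub> = N" using cls_N[OF z] by simp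
  then show ?thesis using cls_carrier[OF z] by simp
qed

lemma IB_zero_sum: "finsum IB h {} = N"
  unfolding finsum_def finprod_def using N_in_IB by (simp add: IB_simps foldD_empty)

context
  assumes ns: "nonsingular R B \<beta>" and ce: "central R B"
    and pr: "projective R IB"
begin

lemma kernel:
  assumes h: "h \<in> carrier F" and z: "bl h = \<zero>"
  shows "h \<in> N"
proof -
  obtain s where s: "mod_hom R IB (free_mod R (carrier IB)) s"
    and sx: "\<And>X. X \<in> carrier IB \<Longrightarrow> finsum IB (\<lambda>p. s X p \<odot>\<^bsub>IB\<^esub> p) {p. s X p \<noteq> \<zero>} = X"
    using pr unfolding projective_def by blast
  have ph: "mod_hom R IB (ring_mod R) (\<lambda>X. s X p)" for p
    unfolding mod_hom_def
  proof (intro conjI ballI funcsetI)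
    show "s X p \<in> carrier (ring_mod R)" if "X \<in> carrier IB" for X
    proof -
      have "s X \<in> carrier (free_mod R (carrier IB))" using s that unfolding mod_hom_def by blast
      then show ?thesis unfolding fm_carrier ring_mod_simps by blast
    qed
    show "s (X \<oplus>\<^bsub>IB\<^esub> Y) p = s X p \<oplus>\<^bsub>ring_mod R\<^esub> s Y p" if "X \<in> carrier IB" "Y \<in> carrier IB" for X Y
      using s that unfolding mod_hom_def fm_add by simp
    show "s (r \<odot>\<^bsub>IB\<^esub> X) p = r \<odot>\<^bsub>ring_mod R\<^esub> s X p" if "r \<in> carrier R" "X \<in> carrier IB" for r X
      using s that unfolding mod_hom_def fm_smult by simp
  qed
  have zero: "s (cls h) p = \<zero>" for p
  proof -
    obtain r where r: "r \<in> carrier R" "\<forall>f\<in>carrier F. s (cls f) p = r \<otimes> bl f"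
      using factor[OF ph ns ce] by blast
    then show ?thesis using h z by simp
  qed
  have "cls h = finsum IB (\<lambda>p. s (cls h) p \<odot>\<^bsub>IB\<^esub> p) {p. s (cls h) p \<noteq> \<zero>}"
    using sx[OF cls_carrier[OF h]] by simp
  also have "\<dots> = N" using zero IB_zero_sum by simp
  finally show ?thesis using cls_N[OF h] by simp
qed

lemma bb_inj: "inj_on (beta_bar R \<beta>) (carrier IB)"
proof (rule inj_onI)
  fix X Y assume "X \<in> carrier IB" "Y \<in> carrier IB" and e: "beta_bar R \<beta> X = beta_bar R \<beta> Y"
  then obtain f g where f: "f \<in> carrier F" "X = cls f" and g: "g \<in> carrier F" "Y = cls g"
    by (metis IB_elim)
  have "bl f = bl g" using e f g bb_cls by simp
  then have "bl (f \<ominus>\<^bsub>F\<^esub> g) = \<zero>" using blm[OF f(1) g(1)] self_minus bl_carrier[OF g(1)] by simp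
  then have "f \<ominus>\<^bsub>F\<^esub> g \<in> N" using kernel F_minus_closed[OF f(1) g(1)] by blast
  then show "X = Y" using cls_eq[OF f(1) g(1)] f g by simp
qed

lemma img_ideal: "ideal (bl ` carrier F) R"
proof (rule idealI)
  show "ring R" by (rule cring.axioms(1)[OF is_cring])
  show "subgroup (bl ` carrier F) (add_monoid R)"
  proof
    show "bl ` carrier F \<subseteq> carrier (add_monoid R)" using bl_carrier by auto
    show "x \<otimes>\<^bsub>add_monoid R\<^esub> y \<in> bl ` carrier F" if as: "x \<in> bl ` carrier F" "y \<in> bl ` carrier F" for x y
    proof -
      obtain f g where "f \<in> carrier F" "g \<in> carrier F" "x = bl f" "y = bl g" using as by blast
      then show ?thesis using bla[of f g] F_add_closed[of f g] by (simp add: image_iff) (metis)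
    qed
    show "\<one>\<^bsub>add_monoid R\<^esub> \<in> bl ` carrier F"
    proof -
      have "\<zero>\<^bsub>F\<^esub> \<in> carrier F" by (rule abelian_monoid.zero_closed[OF abelian_group.axioms(1)[OF fm_abelian_group]])
      then show ?thesis using hom_zero[OF fm_module bl_hom] by (simp add: image_iff) (metis)
    qed
    show "inv\<^bsub>add_monoid R\<^esub> x \<in> bl ` carrier F" if as: "x \<in> bl ` carrier F" for x
    proof -
      obtain f where f: "f \<in> carrier F" "x = bl f" using as by blast
      have "\<ominus>\<^bsub>F\<^esub> f \<in> carrier F" by (rule abelian_group.a_inv_closed[OF fm_abelian_group f(1)])
      moreover have "bl (\<ominus>\<^bsub>F\<^esub> f) = \<ominus> x" using hom_inv[OF fm_module bl_hom f(1)] f(2) by simp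
      ultimately show ?thesis unfolding a_inv_def[symmetric] by (metis image_eqI)
    qed
  qed
  show "x \<otimes> a \<in> bl ` carrier F" if as: "a \<in> bl ` carrier F" "x \<in> carrier R" for a x
  proof -
    obtain f where f: "f \<in> carrier F" "a = bl f" using as by blast
    then show ?thesis using bls[OF as(2) f(1)] F_smult_closed[OF as(2) f(1)] by (metis image_eqI)
  qed
  show "a \<otimes> x \<in> bl ` carrier F" if as: "a \<in> bl ` carrier F" "x \<in> carrier R" for a x
  proof -
    obtain f where f: "f \<in> carrier F" "a = bl f" using as by blast
    then have "a \<otimes> x = x \<otimes> bl f" using m_comm bl_carrier as(2) by simp
    then show ?thesis using bls[OF as(2) f(1)] F_smult_closed[OF as(2) f(1)] by (metis image_eqI)
  qed
qed

lemma bb_surj: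
  assumes idl: "Idl ((\<lambda>(a, b). \<beta> a b) ` (carrier B \<times> carrier B)) = carrier R"
  shows "beta_bar R \<beta> ` carrier IB = carrier R"
proof
  show "beta_bar R \<beta> ` carrier IB \<subseteq> carrier R"
  proof
    fix y assume "y \<in> beta_bar R \<beta> ` carrier IB"
    then obtain X where X: "X \<in> carrier IB" "y = beta_bar R \<beta> X" by (rule imageE) (rule that, assumption+)
    then show "y \<in> carrier R" using hom_carrier[OF bb_hom X(1)] by simp
  qed
  have sub: "(\<lambda>(a, b). \<beta> a b) ` (carrier B \<times> carrier B) \<subseteq> bl ` carrier F"
  proof
    fix x assume "x \<in> (\<lambda>(a, b). \<beta> a b) ` (carrier B \<times> carrier B)"
    then obtain p where p: "p \<in> carrier B \<times> carrier B" "x = (\<lambda>(a, b). \<beta> a b) p" by (rule imageE) (rule that, assumption+)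
    obtain a b where ab: "p = (a, b)" by (cases p)
    have a: "a \<in> carrier B" "b \<in> carrier B" "x = \<beta> a b" using p ab by auto
    have "bl (delta R (a, b)) \<in> bl ` carrier F" using dc[OF a(1,2)] by (rule imageI)
    then show "x \<in> bl ` carrier F" using bld[OF a(1,2)] a(3) by simp
  qed
  have c1: "carrier R \<subseteq> bl ` carrier F" using genideal_minimal[OF img_ideal sub] idl by simp
  have c2: "bl ` carrier F \<subseteq> beta_bar R \<beta> ` carrier IB"
  proof
    fix y assume "y \<in> bl ` carrier F"
    then obtain f where f: "f \<in> carrier F" "y = bl f" by (rule imageE) (rule that, assumption+)
    have "beta_bar R \<beta> (cls f) \<in> beta_bar R \<beta> ` carrier IB" using cls_carrier[OF f(1)] by (rule imageI)
    then show "y \<in> beta_bar R \<beta> ` carrier IB" using bb_cls[OF f(1)] f(2) by simp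
  qed
  show "carrier R \<subseteq> beta_bar R \<beta> ` carrier IB" using c1 c2 by (rule subset_trans)
qed

end
end

theorem proposition3p9:
  fixes R :: "'r ring" and B :: "('r, 'b) module" and \<beta> :: "'b \<Rightarrow> 'b \<Rightarrow> 'r"
  assumes "cring R"
    and "R_algebra R B"
    and "central R B"
    and "bilinear_form R B \<beta>"
    and "invariant_form B \<beta>"
    and "nonsingular R B \<beta>"
    and "Idl\<^bsub>R\<^esub> ((\<lambda>(a, b). \<beta> a b) ` (carrier B \<times> carrier B)) = carrier R"
    and "projective R (IBF R B)"
  shows "mod_iso R (IBF R B) (ring_mod R) (beta_bar R \<beta>)"
proof -
  have cr: "crr R" unfolding crr_def by (rule assms(1))
  interpret ibf_ctx R B \<beta>
    by (rule ibf_ctx.intro[OF cr ibf_ctx_axioms.intro[OF assms(2,4,5)]])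
  show ?thesis unfolding mod_iso_def bij_betw_def ring_mod_simps
    by (intro conjI bb_hom bb_inj[OF assms(6,3,8)] bb_surj[OF assms(6,3,8,7)])
qed


end
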